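(* Let $p$ be a prime and $n$ a positive integer, written $n=p^kn'$ with $k=v_p(n)$. Then: (1) $P(p,n)=p^kP(p,n')$, where in the case $p=2$ it is assumed that $n'\neq1$. (2) If $p>2$ is not a Wieferich prime, then $P(p^2,n)=p^kP(p^2,n')$. (3) If $p>2$ is not a Wieferich prime, then $P(p^3,n)=p^kP(p^3,n')$.
   Context: $v_p(n)$ is the exponent of $p$ in $n$. For positive integers $m,n$, let $\mathbf{Z}_m$ be the integers modulo $m$ and $T:\mathbf{Z}_m^n\to\mathbf{Z}_m^n$, $T(a_0,\dots,a_{n-1})=(a_0+a_1,a_1+a_2,\dots,a_{n-1}+a_0)$. For $\mathbf{a}\in\mathbf{Z}_m^n$ the cycle length of $(T^k\mathbf{a})_{k\ge0}$ is the smallest positive integer $P$ such that there is $N$ with $T^{k+P}\mathbf{a}=T^k\mathbf{a}$ for all $k\ge N$. $P(m,n)$ denotes the maximum of these cycle lengths over all $\mathbf{a}\in\mathbf{Z}_m^n$. A prime $p$ is a Wieferich prime if $2^{p-1}\equiv1\pmod{p^2}$. *)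

theory Defs
  imports "HOL-Number_Theory.Number_Theory"
begin

text \<open>Elements of (Z_m)^n are represented as functions a :: nat => nat with
  a i < m for i < n and a i = 0 for i >= n (entries are residues 0..m-1).\<close>

definition vecs :: "nat \<Rightarrow> nat \<Rightarrow> (nat \<Rightarrow> nat) set" where
  "vecs m n = {a. (\<forall>i<n. a i < m) \<and> (\<forall>i\<ge>n. a i = 0)}"

definition Tmap :: "nat \<Rightarrow> nat \<Rightarrow> (nat \<Rightarrow> nat) \<Rightarrow> (nat \<Rightarrow> nat)" where
  "Tmap m n a = (\<lambda>i. if i < n then (a i + a ((i + 1) mod n)) mod m else 0)"

definition cycle_len :: "nat \<Rightarrow> nat \<Rightarrow> (nat \<Rightarrow> nat) \<Rightarrow> nat" where
  "cycle_len m n a =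
     (LEAST P. 0 < P \<and> (\<exists>N. \<forall>k\<ge>N. (Tmap m n ^^ (k + P)) a = (Tmap m n ^^ k) a))"

definition Pmax :: "nat \<Rightarrow> nat \<Rightarrow> nat" where
  "Pmax m n = Max (cycle_len m n ` vecs m n)"

definition wieferich :: "nat \<Rightarrow> bool" where
  "wieferich p \<longleftrightarrow> prime p \<and> [2 ^ (p - 1) = 1] (mod p\<^sup>2)"

end

theory Submission
  imports Defs "HOL-Library.Z2" "HOL-Computational_Algebra.Polynomial"
begin

definition xn :: "nat \<Rightarrow> int poly" where "xn n = monom 1 n - 1"
definition inI :: "nat \<Rightarrow> nat \<Rightarrow> int poly \<Rightarrow> bool" where
  "inI m n f \<longleftrightarrow> (\<exists>q r. f = xn n * q + smult (int m) r)"

lemma inI_0[simp]: "inI m n 0" unfolding inI_def by (rule exI[of _ 0], rule exI[of _ 0]) simp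
lemma inI_add: "inI m n f \<Longrightarrow> inI m n g \<Longrightarrow> inI m n (f + g)"
proof -
  assume "inI m n f" "inI m n g"
  then obtain q r q' r' where "f = xn n * q + smult (int m) r" "g = xn n * q' + smult (int m) r'"
    unfolding inI_def by blast
  then show ?thesis unfolding inI_def
    by (intro exI[of _ "q+q'"] exI[of _ "r+r'"]) (simp add: algebra_simps smult_add_right)
qed
lemma inI_uminus: "inI m n f \<Longrightarrow> inI m n (- f)"
  unfolding inI_def apply (elim exE) subgoal for q r
    by (rule exI[of _ "-q"], rule exI[of _ "-r"]) (simp add: algebra_simps) done
lemma inI_diff: "inI m n f \<Longrightarrow> inI m n g \<Longrightarrow> inI m n (f - g)"
  using inI_add[of m n f "-g"] inI_uminus[of m n g] by simp
lemma inI_multL: "inI m n f \<Longrightarrow> inI m n (g * f)"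
  unfolding inI_def apply (elim exE) subgoal for q r
    by (rule exI[of _ "g*q"], rule exI[of _ "g*r"]) (simp add: algebra_simps) done
lemma inI_multR: "inI m n f \<Longrightarrow> inI m n (f * g)"
  using inI_multL[of m n f g] by (simp add: mult.commute)
lemma inI_xn: "inI m n (xn n * q)"
  unfolding inI_def by (rule exI[of _ q], rule exI[of _ 0]) simp
lemma inI_smult: "inI m n (smult (int m) r)"
  unfolding inI_def by (rule exI[of _ 0], rule exI[of _ r]) simp
lemma inI_one: "inI 1 n f"
  unfolding inI_def by (rule exI[of _ 0], rule exI[of _ f]) simp
lemma inI_prod: "inI a n f \<Longrightarrow> inI b n g \<Longrightarrow> inI (a*b) n (f*g)"
proof -
  assume "inI a n f" "inI b n g"
  then obtain q r q' r' where f: "f = xn n * q + smult (int a) r" and g: "g = xn n * q' + smult (int b) r'"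
    unfolding inI_def by blast
  show ?thesis unfolding inI_def
    by (intro exI[of _ "q * (xn n * q' + smult (int b) r') + smult (int a) r * q'"] exI[of _ "r*r'"])
      (simp add: f g algebra_simps mult_smult_left mult_smult_right smult_add_right)
qed

lemma monom_pow: "(monom (1::'a::comm_semiring_1) a) ^ c = monom 1 (a*c)"
  by (induct c) (simp_all add: mult_monom)

lemma xn_dvd: "n' dvd n \<Longrightarrow> xn n' dvd xn n"
proof -
  assume "n' dvd n" then obtain c where c: "n = n' * c" by auto
  have "xn n = (monom 1 n')^c - 1" by (simp add: xn_def c monom_pow)
  also have "\<dots> = xn n' * (\<Sum>i<c. (monom 1 n')^i)" unfolding power_diff_1_eq xn_def by simp
  finally show ?thesis by simp
qed

lemma inI_mono: "m' dvd m \<Longrightarrow> n' dvd n \<Longrightarrow> inI m n f \<Longrightarrow> inI m' n' f"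
proof -
  assume a: "m' dvd m" "n' dvd n" "inI m n f"
  then obtain q r where f: "f = xn n * q + smult (int m) r" unfolding inI_def by auto
  obtain c where c: "m = m' * c" using a(1) by auto
  obtain d where d: "xn n = xn n' * d" using xn_dvd[OF a(2)] by auto
  show ?thesis unfolding inI_def
    by (rule exI[of _ "d*q"], rule exI[of _ "smult (int c) r"]) (simp add: f c d algebra_simps)
qed

definition foldc :: "nat \<Rightarrow> int poly \<Rightarrow> nat \<Rightarrow> int" where
  "foldc n f r = (\<Sum>l\<le>degree f. if l mod n = r then coeff f l else 0)"

lemma foldc_bound:
  assumes "degree f \<le> B"
  shows "foldc n f r = (\<Sum>l\<le>B. if l mod n = r then coeff f l else 0)"
  unfolding foldc_def
  by (rule sum.mono_neutral_left) (use assms in \<open>auto simp: coeff_eq_0\<close>)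

lemma foldc_0[simp]: "foldc n 0 r = 0"
  unfolding foldc_def by (simp cong: if_cong)

lemma foldc_add: "foldc n (f + g) r = foldc n f r + foldc n g r"
proof -
  define B where "B = max (degree f) (degree g)"
  have "degree (f+g) \<le> B" "degree f \<le> B" "degree g \<le> B"
    unfolding B_def using degree_add_le_max[of f g] by auto
  then show ?thesis by (simp add: foldc_bound[of _ B] sum.distrib[symmetric] if_distrib) (rule sum.cong, auto)
qed

lemma foldc_uminus: "foldc n (- f) r = - foldc n f r"
  unfolding foldc_def by (simp add: sum_negf[symmetric] if_distrib cong: if_cong)

lemma foldc_diff: "foldc n (f - g) r = foldc n f r - foldc n g r"
  using foldc_add[of n f "-g" r] foldc_uminus[of n g r] by simp

lemma foldc_smult: "foldc n (smult c f) r = c * foldc n f r"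
proof (cases "c = 0")
  case False
  then show ?thesis unfolding foldc_def by (simp add: sum_distrib_left if_distrib cong: if_cong)
qed simp

lemma foldc_sum: "foldc n (\<Sum>i\<in>A. f i) r = (\<Sum>i\<in>A. foldc n (f i) r)"
  by (induct A rule: infinite_finite_induct) (simp_all add: foldc_add)

lemma foldc_monom: "foldc n (monom c l) r = (if l mod n = r then c else 0)"
proof -
  have "foldc n (monom c l) r = (\<Sum>j\<le>l. if j mod n = r then coeff (monom c l) j else 0)"
    by (rule foldc_bound) (simp add: degree_monom_le)
  also have "\<dots> = (\<Sum>j\<in>{l}. if j mod n = r then coeff (monom c l) j else 0)"
    by (rule sum.mono_neutral_right) (auto simp: coeff_monom)
  finally show ?thesis by (simp add: coeff_monom)
qed

lemma sum_shift_split: "(\<Sum>l<s + (d::nat). g l) = (\<Sum>l<s. g l) + (\<Sum>l<d. g (l + s))"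
  by (induct d) (simp_all add: add.commute add.left_commute)

lemma foldc_monom_mult:
  "foldc n (monom 1 s * q) r = (\<Sum>l\<le>degree q. if (l + s) mod n = r then coeff q l else 0)"
proof -
  have d: "degree (monom 1 s * q) \<le> s + degree q"
    by (metis add.commute degree_monom_le degree_mult_le le_trans add_le_mono order_refl)
  have "foldc n (monom 1 s * q) r = (\<Sum>l<s + Suc (degree q). if l mod n = r then coeff (monom 1 s * q) l else 0)"
    using foldc_bound[OF d] by (simp add: lessThan_Suc_atMost[symmetric])
  also have "\<dots> = (\<Sum>l<Suc (degree q). if (l + s) mod n = r then coeff q l else 0)"
    unfolding sum_shift_split by (simp add: coeff_monom_mult cong: if_cong)
  finally show ?thesis by (simp add: lessThan_Suc_atMost)
qed

lemma foldc_xn: "0 < n \<Longrightarrow> foldc n (xn n * q) r = 0"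
  unfolding xn_def by (simp add: left_diff_distrib foldc_diff foldc_monom_mult) (simp add: foldc_def)

lemma foldc_inI: "0 < n \<Longrightarrow> inI m n f \<Longrightarrow> int m dvd foldc n f r"
  unfolding inI_def by (auto simp: foldc_add foldc_xn foldc_smult)

lemma smult_sum_right: "smult a (\<Sum>i\<in>S. f i) = (\<Sum>i\<in>S. smult a (f i))"
  by (induct S rule: infinite_finite_induct) (simp_all add: smult_add_right)

definition red :: "nat \<Rightarrow> int poly \<Rightarrow> int poly" where
  "red n f = (\<Sum>r<n. monom (foldc n f r) r)"

lemma coeff_sum_monom_lt: "coeff (\<Sum>r<n. monom (a r) r) j = (if j < n then a j else 0)"
  by (simp add: coeff_sum coeff_monom)

lemma red_alt: "0 < n \<Longrightarrow> red n f = (\<Sum>l\<le>degree f. monom (coeff f l) (l mod n))"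
proof (rule poly_eqI)
  fix j assume n: "0 < n"
  have "coeff (\<Sum>l\<le>degree f. monom (coeff f l) (l mod n)) j =
        (\<Sum>l\<le>degree f. if l mod n = j then coeff f l else 0)"
    by (simp add: coeff_sum coeff_monom eq_commute)
  also have "\<dots> = (if j < n then foldc n f j else 0)"
  proof (cases "j < n")
    case False
    then have "\<And>l. l mod n \<noteq> j" using n by (metis mod_less_divisor)
    then show ?thesis using False by simp
  qed (simp add: foldc_def)
  finally show "coeff (red n f) j = coeff (\<Sum>l\<le>degree f. monom (coeff f l) (l mod n)) j"
    unfolding red_def coeff_sum_monom_lt by simp
qed

lemma xn_dvd_red: assumes n: "0 < n" shows "xn n dvd (f - red n f)"
proof -
  have eq: "monom c l - monom c (l mod n) = monom c (l mod n) * xn (n * (l div n))" for c :: int and l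
  proof -
    have "monom c l = monom c (l mod n) * monom 1 (n * (l div n))"
      by (simp add: mult_monom)
    then show ?thesis by (simp add: xn_def right_diff_distrib)
  qed
  have "f - red n f = (\<Sum>l\<le>degree f. monom (coeff f l) l - monom (coeff f l) (l mod n))"
    using red_alt[OF n, of f] poly_as_sum_of_monoms[of f] by (simp add: sum_subtractf)
  also have "\<dots> = (\<Sum>l\<le>degree f. monom (coeff f l) (l mod n) * xn (n * (l div n)))"
    by (simp add: eq)
  finally have eq2: "f - red n f = (\<Sum>l\<le>degree f. monom (coeff f l) (l mod n) * xn (n * (l div n)))" .
  show ?thesis unfolding eq2 by (intro dvd_sum) (rule dvd_mult[OF xn_dvd], simp)
qed

lemma inI_iff_foldc: assumes n: "0 < n" shows "inI m n f \<longleftrightarrow> (\<forall>r<n. int m dvd foldc n f r)"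
proof
  assume "inI m n f" then show "\<forall>r<n. int m dvd foldc n f r" using foldc_inI[OF n] by blast
next
  assume h: "\<forall>r<n. int m dvd foldc n f r"
  define k where "k r = foldc n f r div int m" for r
  have "red n f = (\<Sum>r<n. smult (int m) (monom (k r) r))"
    unfolding red_def
    by (rule sum.cong) (use h in \<open>auto simp: k_def smult_monom\<close>)
  also have "\<dots> = smult (int m) (\<Sum>r<n. monom (k r) r)" by (simp add: smult_sum_right)
  finally have "red n f = smult (int m) (\<Sum>r<n. monom (k r) r)" .
  moreover obtain q where "f - red n f = xn n * q" using xn_dvd_red[OF n] by (auto elim: dvdE)
  ultimately have "f = xn n * q + smult (int m) (\<Sum>r<n. monom (k r) r)"
    by (metis diff_add_cancel)
  then show "inI m n f" unfolding inI_def by blast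
qed

definition vecR :: "nat \<Rightarrow> nat \<Rightarrow> int poly \<Rightarrow> nat \<Rightarrow> nat" where
  "vecR m n f = (\<lambda>i. if i < n then nat (foldc n f ((n - i) mod n) mod int m) else 0)"

lemma idx_inv: fixes n r :: nat assumes "0 < n" "r < n" shows "(n - (n - r) mod n) mod n = r"
proof (cases "r = 0")
  case True then show ?thesis by simp
next
  case False
  then have "(n - r) mod n = n - r" using assms by simp
  then show ?thesis using assms by simp
qed

lemma idx_inj: "i < (n::nat) \<Longrightarrow> j < n \<Longrightarrow> (n - i) mod n = (n - j) mod n \<Longrightarrow> i = j"
  by (metis idx_inv[of n i] idx_inv[of n j] less_nat_zero_code neq0_conv)

lemma vecR_eq_iff:
  assumes n: "0 < n" and m: "0 < m"
  shows "vecR m n f = vecR m n g \<longleftrightarrow> inI m n (f - g)"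
proof
  assume h: "vecR m n f = vecR m n g"
  show "inI m n (f - g)" unfolding inI_iff_foldc[OF n]
  proof (intro allI impI)
    fix r assume r: "r < n"
    define i where "i = (n - r) mod n"
    have i: "i < n" "(n - i) mod n = r" using n r idx_inv[OF n r] by (auto simp: i_def)
    have "nat (foldc n f r mod int m) = nat (foldc n g r mod int m)"
      using fun_cong[OF h, of i] i by (simp add: vecR_def)
    then have "foldc n f r mod int m = foldc n g r mod int m"
      using m by (simp add: nat_eq_iff2)
    then show "int m dvd foldc n (f - g) r" by (simp add: foldc_diff mod_eq_dvd_iff)
  qed
next
  assume h: "inI m n (f - g)"
  show "vecR m n f = vecR m n g"
  proof
    fix i
    have "int m dvd foldc n (f - g) ((n - i) mod n)" using foldc_inI[OF n h] by blast
    then have "foldc n f ((n - i) mod n) mod int m = foldc n g ((n - i) mod n) mod int m"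
      by (simp add: foldc_diff mod_eq_dvd_iff)
    then show "vecR m n f i = vecR m n g i" by (simp add: vecR_def)
  qed
qed

definition uu :: "int poly" where "uu = [:1, 1:]"

lemma uu_eq: "uu * f = f + monom 1 1 * f"
proof -
  have "uu = 1 + monom 1 1" by (simp add: uu_def monom_Suc one_pCons)
  then have "uu * f = (1 + monom 1 1) * f" by simp
  then show ?thesis by (simp only: distrib_right mult_1_left)
qed

lemma foldc_x:
  assumes n: "0 < n" and r: "r < n"
  shows "foldc n (monom 1 1 * f) r = foldc n f ((r + n - 1) mod n)"
proof -
  have c: "((l + 1) mod n = r) \<longleftrightarrow> (l mod n = (r + n - 1) mod n)" for l
  proof -
    have "((l + 1) mod n = r) \<longleftrightarrow> (l + 1) mod n = r mod n" using r by simp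
    also have "\<dots> \<longleftrightarrow> (l + 1 + (n - 1)) mod n = (r + (n - 1)) mod n"
      using cong_add_rcancel_nat[of "l+1" "n-1" r n] unfolding cong_def by simp
    also have "l + 1 + (n - 1) = l + n" using n by simp
    also have "r + (n - 1) = r + n - 1" using n by simp
    finally show ?thesis by simp
  qed
  have "foldc n (monom 1 1 * f) r = (\<Sum>l\<le>degree f. if (l + 1) mod n = r then coeff f l else 0)"
    by (rule foldc_monom_mult)
  also have "\<dots> = foldc n f ((r + n - 1) mod n)"
    unfolding foldc_def by (rule sum.cong[OF refl]) (simp only: c)
  finally show ?thesis .
qed

lemma idx_step:
  fixes n i :: nat assumes "0 < n" "i < n"
  shows "((n - i) mod n + n - 1) mod n = (n - (i + 1) mod n) mod n"
proof (cases "i + 1 < n")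
  case True
  show ?thesis
  proof (cases "i = 0")
    case True then show ?thesis using assms \<open>i + 1 < n\<close> by simp
  next
    case False
    then have "(n - i) mod n = n - i" using assms by simp
    moreover have e: "n - i + n - 1 = n + (n - (i + 1))" using \<open>i+1<n\<close> by arith
    ultimately have "((n - i) mod n + n - 1) mod n = (n + (n - (i + 1))) mod n"
      by (simp only:)
    also have "\<dots> = n - (i + 1)" unfolding mod_add_self1 using \<open>i + 1 < n\<close> by simp
    also have "\<dots> = (n - (i + 1) mod n) mod n" using \<open>i + 1 < n\<close> by simp
    finally show ?thesis .
  qed
next
  case False
  then have i: "i + 1 = n" using assms by simp
  show ?thesis
  proof (cases "n = 1")
    case True then show ?thesis using i by simp
  next
    case False
    then have "(n - i) mod n = 1" using i by simp
    then show ?thesis using i assms by simp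
  qed
qed

lemma nat_mod_add: "0 < m \<Longrightarrow> nat ((A + B) mod int m) = (nat (A mod int m) + nat (B mod int m)) mod m"
proof -
  assume m: "0 < m"
  have "nat ((A + B) mod int m) = nat ((A mod int m + B mod int m) mod int m)" by (simp add: mod_add_eq)
  also have "\<dots> = nat (A mod int m + B mod int m) mod nat (int m)"
    by (rule nat_mod_distrib) (use m in auto)
  also have "nat (A mod int m + B mod int m) = nat (A mod int m) + nat (B mod int m)"
    by (rule nat_add_distrib) (use m in auto)
  finally show ?thesis by simp
qed

lemma vecR_u:
  assumes n: "0 < n" and m: "0 < m"
  shows "vecR m n (uu * f) = Tmap m n (vecR m n f)"
proof
  fix i
  show "vecR m n (uu * f) i = Tmap m n (vecR m n f) i"
  proof (cases "i < n")
    case True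
    have r: "(n - i) mod n < n" using n by simp
    have i1: "(i + 1) mod n < n" using n by simp
    have "foldc n (uu * f) ((n - i) mod n) = foldc n f ((n - i) mod n) + foldc n f ((n - (i + 1) mod n) mod n)"
      unfolding uu_eq foldc_add foldc_x[OF n r] idx_step[OF n True] ..
    then show ?thesis using True i1 m
      by (simp add: vecR_def Tmap_def nat_mod_add)
  qed (simp add: vecR_def Tmap_def)
qed

lemma vecR_pow:
  assumes n: "0 < n" and m: "0 < m"
  shows "(Tmap m n ^^ k) (vecR m n f) = vecR m n (uu ^ k * f)"
  by (induct k) (simp_all add: vecR_u[OF n m, symmetric] mult.assoc)

lemma vecR_in: "0 < m \<Longrightarrow> vecR m n f \<in> vecs m n"
  by (auto simp: vecs_def vecR_def nat_less_iff)

definition vpoly :: "nat \<Rightarrow> (nat \<Rightarrow> nat) \<Rightarrow> int poly" where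
  "vpoly n a = (\<Sum>i<n. monom (int (a i)) ((n - i) mod n))"

lemma vecs_surj:
  assumes n: "0 < n" and a: "a \<in> vecs m n"
  shows "vecR m n (vpoly n a) = a"
proof
  fix j
  show "vecR m n (vpoly n a) j = a j"
  proof (cases "j < n")
    case True
    have "foldc n (vpoly n a) ((n - j) mod n) = (\<Sum>i<n. if i = j then int (a i) else 0)"
      unfolding vpoly_def foldc_sum foldc_monom
      by (rule sum.cong) (use True idx_inj[of _ n j] in auto)
    also have "\<dots> = int (a j)" using True by simp
    finally show ?thesis using True a by (simp add: vecR_def vecs_def)
  qed (use a in \<open>simp add: vecR_def vecs_def\<close>)
qed

lemma vecs_finite: "finite (vecs m n)"
proof -
  have "vecs m n \<subseteq> (\<lambda>xs i. if i < n then xs ! i else 0) ` {xs. set xs \<subseteq> {..<m} \<and> length xs = n}"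
  proof
    fix a assume a: "a \<in> vecs m n"
    show "a \<in> (\<lambda>xs i. if i < n then xs ! i else 0) ` {xs. set xs \<subseteq> {..<m} \<and> length xs = n}"
    proof
      show "a = (\<lambda>i. if i < n then map a [0..<n] ! i else 0)" using a by (auto simp: vecs_def)
      show "map a [0..<n] \<in> {xs. set xs \<subseteq> {..<m} \<and> length xs = n}" using a by (auto simp: vecs_def)
    qed
  qed
  moreover have "finite {xs. set xs \<subseteq> {..<m::nat} \<and> length xs = n}"
    by (rule finite_lists_length_eq) simp
  ultimately show ?thesis by (meson finite_imageI finite_subset)
qed

definition per' :: "nat \<Rightarrow> nat \<Rightarrow> int poly \<Rightarrow> nat \<Rightarrow> bool" where
  "per' m n f P \<longleftrightarrow> (\<exists>K. inI m n (uu ^ K * (uu ^ P - 1) * f))"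

abbreviation per :: "nat \<Rightarrow> nat \<Rightarrow> nat \<Rightarrow> bool" where "per m n P \<equiv> per' m n 1 P"

definition E :: "nat \<Rightarrow> nat \<Rightarrow> nat" where "E m n = (LEAST P. 0 < P \<and> per m n P)"

lemma cycle_len_eq:
  assumes n: "0 < n" and m: "0 < m"
  shows "cycle_len m n (vecR m n f) = (LEAST P. 0 < P \<and> per' m n f P)"
proof -
  have "(\<exists>N. \<forall>k\<ge>N. (Tmap m n ^^ (k + P)) (vecR m n f) = (Tmap m n ^^ k) (vecR m n f)) \<longleftrightarrow> per' m n f P" for P
  proof
    assume "\<exists>N. \<forall>k\<ge>N. (Tmap m n ^^ (k + P)) (vecR m n f) = (Tmap m n ^^ k) (vecR m n f)"
    then obtain N where "(Tmap m n ^^ (N + P)) (vecR m n f) = (Tmap m n ^^ N) (vecR m n f)" by blast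
    then have "inI m n (uu ^ (N + P) * f - uu ^ N * f)"
      unfolding vecR_pow[OF n m] vecR_eq_iff[OF n m] .
    moreover have "uu ^ (N + P) * f - uu ^ N * f = uu ^ N * (uu ^ P - 1) * f"
      by (simp add: power_add algebra_simps)
    ultimately show "per' m n f P" unfolding per'_def by auto
  next
    assume "per' m n f P"
    then obtain K where K: "inI m n (uu ^ K * (uu ^ P - 1) * f)" unfolding per'_def by blast
    show "\<exists>N. \<forall>k\<ge>N. (Tmap m n ^^ (k + P)) (vecR m n f) = (Tmap m n ^^ k) (vecR m n f)"
    proof (intro exI allI impI)
      fix k assume "K \<le> k"
      then obtain d where d: "k = K + d" using le_Suc_ex by blast
      have "uu ^ (k + P) * f - uu ^ k * f = uu ^ d * (uu ^ K * (uu ^ P - 1) * f)"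
        unfolding d by (simp add: power_add algebra_simps)
      then have "inI m n (uu ^ (k + P) * f - uu ^ k * f)" using inI_multL[OF K] by simp
      then show "(Tmap m n ^^ (k + P)) (vecR m n f) = (Tmap m n ^^ k) (vecR m n f)"
        unfolding vecR_pow[OF n m] vecR_eq_iff[OF n m] .
    qed
  qed
  then show ?thesis unfolding cycle_len_def by simp
qed

lemma per'_multR: "per m n P \<Longrightarrow> per' m n f P"
  unfolding per'_def using inI_multR by fastforce

lemma per_add: assumes "per m n P" "per m n Q" shows "per m n (P + Q)"
proof -
  obtain K1 K2 where K1: "inI m n (uu ^ K1 * (uu ^ P - 1))" and K2: "inI m n (uu ^ K2 * (uu ^ Q - 1))"
    using assms unfolding per'_def by auto
  have "uu ^ (K1 + K2) * (uu ^ (P + Q) - 1) = (uu ^ K2 * uu ^ Q) * (uu ^ K1 * (uu ^ P - 1)) + uu ^ K1 * (uu ^ K2 * (uu ^ Q - 1))"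
    by (simp add: power_add algebra_simps)
  moreover have "inI m n \<dots>" by (intro inI_add inI_multL K1 K2)
  ultimately show ?thesis unfolding per'_def by (metis mult_1_right)
qed

lemma per_diff: assumes "per m n P" "per m n Q" "Q \<le> P" shows "per m n (P - Q)"
proof -
  obtain K1 K2 where K1: "inI m n (uu ^ K1 * (uu ^ P - 1))" and K2: "inI m n (uu ^ K2 * (uu ^ Q - 1))"
    using assms unfolding per'_def by auto
  obtain d where d: "P = Q + d" using assms(3) le_Suc_ex by blast
  have "uu ^ (K1 + K2 + Q) * (uu ^ (P - Q) - 1) = uu ^ K2 * (uu ^ K1 * (uu ^ P - 1)) - uu ^ K1 * (uu ^ K2 * (uu ^ Q - 1))"
    unfolding d by (simp add: power_add algebra_simps)
  moreover have "inI m n \<dots>" by (intro inI_diff inI_multL K1 K2)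
  ultimately show ?thesis unfolding per'_def by (metis mult_1_right)
qed

lemma per_0: "per m n 0"
  unfolding per'_def by (rule exI[of _ 0]) simp

lemma per_mult: "per m n P \<Longrightarrow> per m n (c * P)"
  by (induct c) (simp_all add: per_0 per_add)

lemma per_E: assumes "\<exists>P>0. per m n P" shows "0 < E m n" "per m n (E m n)"
  using LeastI_ex[of "\<lambda>P. 0 < P \<and> per m n P"] assms unfolding E_def by auto

lemma per_iff_dvd: assumes ex: "\<exists>P>0. per m n P" shows "per m n P \<longleftrightarrow> E m n dvd P"
proof
  assume "E m n dvd P" then show "per m n P" using per_mult[OF per_E(2)[OF ex]] by (auto elim!: dvdE simp: mult.commute)
next
  assume h: "per m n P"
  have "per m n (P - (P div E m n) * E m n)"
    by (rule per_diff[OF h per_mult[OF per_E(2)[OF ex]]]) (metis div_mult_mod_eq le_add1)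
  then have p: "per m n (P mod E m n)" by (simp add: minus_div_mult_eq_mod)
  show "E m n dvd P"
  proof (rule ccontr)
    assume "\<not> E m n dvd P"
    then have "0 < P mod E m n" by (simp add: mod_greater_zero_iff_not_dvd)
    then have "E m n \<le> P mod E m n" using p unfolding E_def by (simp add: Least_le)
    moreover have "P mod E m n < E m n" using per_E(1)[OF ex] by simp
    ultimately show False by simp
  qed
qed

lemma per_exists: assumes n: "0 < n" and m: "0 < m" shows "\<exists>P>0. per m n P"
proof -
  define g where "g k = vecR m n (uu ^ k * 1)" for k
  have "range g \<subseteq> vecs m n" using vecR_in[OF m] by (auto simp: g_def)
  then have "finite (range g)" using vecs_finite finite_subset by blast
  then have "\<not> inj g" using finite_imageD by blast
  then obtain i j where ij: "g i = g j" "i \<noteq> j" unfolding inj_def by blast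
  have "\<exists>i j. i < j \<and> g i = g j"
  proof (cases "i < j")
    case True then show ?thesis using ij by blast
  next
    case False then have "j < i" using ij by simp
    then show ?thesis using ij by metis
  qed
  then obtain i j where ij: "i < j" "g i = g j" by blast
  then have "inI m n (uu ^ j * 1 - uu ^ i * 1)" unfolding g_def vecR_eq_iff[OF n m] by (metis vecR_eq_iff[OF n m])
  moreover obtain d where d: "j = i + d" using ij le_Suc_ex less_imp_le_nat by blast
  ultimately have "inI m n (uu ^ i * (uu ^ d - 1) * 1)" by (simp add: power_add algebra_simps)
  then have "per m n d" unfolding per'_def by blast
  moreover have "0 < d" using d ij by simp
  ultimately show ?thesis by blast
qed

lemma Pmax_E: assumes n: "0 < n" and m: "2 \<le> m" shows "Pmax m n = E m n"
proof -
  have m0: "0 < m" using m by simp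
  have ex: "\<exists>P>0. per m n P" by (rule per_exists[OF n m0])
  have le: "cycle_len m n a \<le> E m n" if a: "a \<in> vecs m n" for a
  proof -
    have "cycle_len m n a = (LEAST P. 0 < P \<and> per' m n (vpoly n a) P)"
      using cycle_len_eq[OF n m0, of "vpoly n a"] vecs_surj[OF n a] by simp
    also have "\<dots> \<le> E m n" by (rule Least_le) (use per_E[OF ex] per'_multR in auto)
    finally show ?thesis .
  qed
  have e1: "vecR m n 1 \<in> vecs m n" by (rule vecR_in[OF m0])
  have e2: "cycle_len m n (vecR m n 1) = E m n" unfolding cycle_len_eq[OF n m0] E_def ..
  show ?thesis unfolding Pmax_def
  proof (rule Max_eqI)
    show "finite (cycle_len m n ` vecs m n)" using vecs_finite by simp
    show "y \<le> E m n" if "y \<in> cycle_len m n ` vecs m n" for y using that le by auto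
    show "E m n \<in> cycle_len m n ` vecs m n" using e1 e2 by force
  qed
qed

lemma frob_ring:
  fixes a b :: "'a::comm_ring_1"
  assumes p: "prime p"
  shows "of_nat p dvd ((a + b) ^ p - a ^ p - b ^ p)"
proof -
  define f where "f k = of_nat (p choose k) * a ^ k * b ^ (p - k)" for k
  have p0: "0 < p" using p prime_gt_0_nat by blast
  have "(a + b) ^ p = (\<Sum>k<Suc p. f k)" unfolding f_def binomial_ring lessThan_Suc_atMost ..
  also have "\<dots> = (\<Sum>k\<in>{0..<p}. f k) + f p" by (simp add: atLeast0LessThan)
  also have "(\<Sum>k\<in>{0..<p}. f k) = f 0 + (\<Sum>k\<in>{1..<p}. f k)" using p0 by (simp add: sum.atLeast_Suc_lessThan)
  finally have eq: "(a + b) ^ p - a ^ p - b ^ p = (\<Sum>k\<in>{1..<p}. f k)" by (simp add: f_def)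
  have "of_nat p dvd f k" if k: "k \<in> {1..<p}" for k
  proof -
    have "p dvd (p choose k)" using dvd_choose_prime[of k p] k p p0 by auto
    then obtain c where "p choose k = p * c" by (auto elim: dvdE)
    then show ?thesis unfolding f_def by (simp add: mult.assoc)
  qed
  then show ?thesis unfolding eq by (intro dvd_sum) auto
qed

lemma inI_of_nat_dvd: "(of_nat m :: int poly) dvd f \<Longrightarrow> inI m n f"
proof -
  assume "(of_nat m :: int poly) dvd f"
  then obtain r where "f = [:int m:] * r" unfolding of_nat_poly by (auto elim: dvdE)
  then have "f = xn n * 0 + smult (int m) r" by simp
  then show ?thesis unfolding inI_def by blast
qed

lemma frob: "prime p \<Longrightarrow> inI p n ((f + g) ^ p - f ^ p - g ^ p)"
  by (rule inI_of_nat_dvd, rule frob_ring)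

lemma inI_pow_cong: "inI m n (a - b) \<Longrightarrow> inI m n (a ^ k - b ^ k)"
proof -
  assume h: "inI m n (a - b)"
  have "a ^ k - b ^ k = (a - b) * (\<Sum>i<k. b ^ (k - Suc i) * a ^ i)" by (rule power_diff_sumr2)
  then show ?thesis using inI_multR[OF h] by simp
qed

lemma inI_mult_cong: "inI m n (a - a') \<Longrightarrow> inI m n (b - b') \<Longrightarrow> inI m n (a * b - a' * b')"
proof -
  assume h: "inI m n (a - a')" "inI m n (b - b')"
  have "a * b - a' * b' = (a - a') * b + a' * (b - b')" by (simp add: algebra_simps)
  then show ?thesis using inI_add[OF inI_multR[OF h(1)] inI_multL[OF h(2)]] by simp
qed

lemma inI_sym: "inI m n (a - b) \<Longrightarrow> inI m n (b - a)"
  using inI_uminus by fastforce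

lemma inI_trans: "inI m n (a - b) \<Longrightarrow> inI m n (b - c) \<Longrightarrow> inI m n (a - c)"
  using inI_add by fastforce

lemma inI_cong_iff: "inI m n (a - b) \<Longrightarrow> inI m n a \<longleftrightarrow> inI m n b"
  using inI_add inI_diff by fastforce

lemma frob_uu: assumes p: "prime p" shows "inI p n (uu ^ (p ^ j) - (1 + monom 1 (p ^ j)))"
proof (induct j)
  case 0 then show ?case by (simp add: uu_eq[of 1, simplified] add.commute)
next
  case (Suc j)
  have "inI p n ((uu ^ (p ^ j)) ^ p - (1 + monom 1 (p ^ j)) ^ p)" by (rule inI_pow_cong[OF Suc])
  moreover have "inI p n ((1 + monom 1 (p ^ j)) ^ p - 1 ^ p - (monom 1 (p ^ j)) ^ p)" by (rule frob[OF p])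
  ultimately have "inI p n (((uu ^ (p ^ j)) ^ p - (1 + monom 1 (p ^ j)) ^ p) + ((1 + monom 1 (p ^ j)) ^ p - 1 ^ p - (monom 1 (p ^ j)) ^ p))"
    by (rule inI_add)
  then have "inI p n ((uu ^ (p ^ j)) ^ p - (1 + (monom 1 (p ^ j)) ^ p))"
    by (simp add: algebra_simps)
  moreover have "(uu ^ (p ^ j)) ^ p = uu ^ (p ^ Suc j)" by (simp only: power_mult[symmetric] power_Suc2)
  moreover have "(monom 1 (p ^ j)) ^ p = (monom 1 (p ^ Suc j) :: int poly)" by (simp only: monom_pow power_Suc2)
  ultimately show ?case by simp
qed

lemma pcompose_monom': "pcompose (monom c i) q = smult c (q ^ i)"
  by (induct i) (simp_all add: monom_Suc pcompose_pCons monom_0 mult_smult_right)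

lemma pcompose_pow: "pcompose (f ^ k) q = (pcompose f q) ^ k"
  by (induct k) (simp_all add: pcompose_1 pcompose_mult)

lemma pcompose_monom_monom: "pcompose (monom (c::int) i) (monom 1 p) = monom c (p * i)"
  unfolding pcompose_monom' monom_pow smult_monom by (simp add: mult.commute)

lemma sigma_sum: "pcompose (g::int poly) (monom 1 p) = (\<Sum>i\<le>degree g. monom (coeff g i) (p * i))"
proof -
  have "pcompose g (monom 1 p) = pcompose (\<Sum>i\<le>degree g. monom (coeff g i) i) (monom 1 p)"
    by (simp add: poly_as_sum_of_monoms)
  also have "\<dots> = (\<Sum>i\<le>degree g. monom (coeff g i) (p * i))"
    unfolding pcompose_sum pcompose_monom_monom ..
  finally show ?thesis .
qed

lemma sigma_xn: "pcompose (xn n) (monom 1 p) = xn (p * n)"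
  by (simp add: xn_def pcompose_diff pcompose_monom' pcompose_1 monom_pow smult_monom)

lemma uu_alt: "uu = 1 + monom 1 1" by (simp add: uu_def monom_Suc one_pCons)

lemma sigma_uu: "pcompose uu (monom 1 p) = 1 + monom 1 p"
  unfolding uu_alt pcompose_add pcompose_monom' pcompose_1 by simp

lemma inI_sigma: "inI m n f \<Longrightarrow> inI m (p * n) (pcompose f (monom 1 p))"
proof -
  assume "inI m n f"
  then obtain q r where "f = xn n * q + smult (int m) r" unfolding inI_def by blast
  then have "pcompose f (monom 1 p) = xn (p * n) * pcompose q (monom 1 p) + smult (int m) (pcompose r (monom 1 p))"
    by (simp add: pcompose_add pcompose_mult pcompose_smult sigma_xn)
  then show ?thesis unfolding inI_def by blast
qed

lemma inI_desigma:
  assumes n: "0 < n" and p: "0 < p" and h: "inI m (p * n) (pcompose g (monom 1 p))"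
  shows "inI m n g"
  unfolding inI_iff_foldc[OF n]
proof (intro allI impI)
  fix r assume r: "r < n"
  have pn: "0 < p * n" using n p by simp
  have "int m dvd foldc (p * n) (pcompose g (monom 1 p)) (p * r)"
    using h unfolding inI_iff_foldc[OF pn] using r p by simp
  also have "foldc (p * n) (pcompose g (monom 1 p)) (p * r) = (\<Sum>i\<le>degree g. if (p * i) mod (p * n) = p * r then coeff g i else 0)"
    unfolding sigma_sum foldc_sum foldc_monom ..
  also have "\<dots> = foldc n g r"
    unfolding foldc_def by (rule sum.cong[OF refl]) (use p in \<open>simp only: mult_mod_right[symmetric] mult_left_cancel\<close>)
  finally show "int m dvd foldc n g r" .
qed

lemma cong_sigma:
  assumes p: "prime p"
  shows "inI p N (uu ^ (p * K) * (uu ^ (p * P) - 1) - pcompose (uu ^ K * (uu ^ P - 1)) (monom 1 p))"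
proof -
  have s: "pcompose (uu ^ K * (uu ^ P - 1)) (monom 1 p) = (1 + monom 1 p) ^ K * ((1 + monom 1 p) ^ P - 1)"
    by (simp add: pcompose_mult pcompose_pow pcompose_diff pcompose_1 sigma_uu)
  have h: "inI p N (uu ^ p - (1 + monom 1 p))" using frob_uu[OF p, of N 1] by simp
  have "inI p N ((uu ^ p) ^ K * ((uu ^ p) ^ P - 1) - (1 + monom 1 p) ^ K * ((1 + monom 1 p) ^ P - 1))"
    by (rule inI_mult_cong[OF inI_pow_cong[OF h]]) (use inI_pow_cong[OF h, of P] in simp)
  then show ?thesis unfolding s by (simp add: power_mult)
qed

lemma per_up:
  assumes p: "prime p" and h: "per p n P"
  shows "per p (p * n) (p * P)"
proof -
  obtain K where K: "inI p n (uu ^ K * (uu ^ P - 1))" using h unfolding per'_def by auto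
  have "inI p (p * n) (pcompose (uu ^ K * (uu ^ P - 1)) (monom 1 p))" by (rule inI_sigma[OF K])
  then have "inI p (p * n) (uu ^ (p * K) * (uu ^ (p * P) - 1))"
    using inI_cong_iff[OF cong_sigma[OF p]] by blast
  then show ?thesis unfolding per'_def by auto
qed

lemma per_down:
  assumes p: "prime p" and n: "0 < n" and h: "per p (p * n) (p * P)"
  shows "per p n P"
proof -
  have p0: "0 < p" using p prime_gt_0_nat by blast
  obtain K where K: "inI p (p * n) (uu ^ K * (uu ^ (p * P) - 1))" using h unfolding per'_def by auto
  have "inI p (p * n) (uu ^ ((p - 1) * K) * (uu ^ K * (uu ^ (p * P) - 1)))" by (rule inI_multL[OF K])
  moreover have "(p - 1) * K + K = p * K" using p0 by (simp add: algebra_simps)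
  ultimately have "inI p (p * n) (uu ^ (p * K) * (uu ^ (p * P) - 1))"
    by (metis mult.assoc power_add)
  then have "inI p (p * n) (pcompose (uu ^ K * (uu ^ P - 1)) (monom 1 p))"
    using inI_cong_iff[OF cong_sigma[OF p]] by blast
  then have "inI p n (uu ^ K * (uu ^ P - 1))" by (rule inI_desigma[OF n p0])
  then show ?thesis unfolding per'_def by auto
qed

lemma E_rec:
  assumes p: "prime p" and n: "0 < n" and d: "p dvd E p (p * n)"
  shows "E p (p * n) = p * E p n"
proof -
  have p0: "0 < p" using p prime_gt_0_nat by blast
  have ex1: "\<exists>P>0. per p n P" by (rule per_exists[OF n p0])
  have ex2: "\<exists>P>0. per p (p * n) P" by (rule per_exists) (use n p0 in auto)
  obtain L where L: "E p (p * n) = p * L" using d by (auto elim: dvdE)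
  have "per p (p * n) (p * L)" using per_E(2)[OF ex2] L by simp
  then have "per p n L" by (rule per_down[OF p n])
  then have a: "E p n dvd L" using per_iff_dvd[OF ex1] by blast
  have "per p (p * n) (p * E p n)" by (rule per_up[OF p per_E(2)[OF ex1]])
  then have "p * L dvd p * E p n" using per_iff_dvd[OF ex2] L by simp
  then have "L dvd E p n" using p0 by simp
  then show ?thesis using a L by (simp add: dvd_antisym)
qed

lemma per_mono: "m' dvd m \<Longrightarrow> n' dvd n \<Longrightarrow> per m n P \<Longrightarrow> per m' n' P"
  unfolding per'_def using inI_mono by blast

lemma E_mono:
  assumes "m' dvd m" "n' dvd n" "0 < m'" "0 < n'" "0 < m" "0 < n"
  shows "E m' n' dvd E m n"
proof -
  have ex1: "\<exists>P>0. per m n P" by (rule per_exists) (use assms in auto)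
  have ex2: "\<exists>P>0. per m' n' P" by (rule per_exists) (use assms in auto)
  show ?thesis using per_mono[OF assms(1,2) per_E(2)[OF ex1]] per_iff_dvd[OF ex2] by blast
qed

lemma poly_uu: "poly uu x = 1 + x" by (simp add: uu_def)
lemma pderiv_uu: "pderiv uu = 1" by (simp add: uu_def pderiv_pCons)

lemma prime_int_not_dvd_2pow:
  assumes p: "prime p" "p \<noteq> 2" shows "\<not> int p dvd 2 ^ K"
proof
  assume "int p dvd 2 ^ K"
  moreover have pi: "prime (int p)" using p by simp
  ultimately have "int p dvd 2" using prime_dvd_power by blast
  then have "p dvd 2" by presburger
  then have "p \<le> 2" by (rule dvd_imp_le) simp
  then show False using p prime_ge_2_nat[of p] by simp
qed

lemma base_odd:
  assumes p: "prime p" "p \<noteq> 2" and h: "per p p P"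
  shows "p dvd P"
proof -
  have pi: "prime (int p)" using p by simp
  obtain K where K: "inI p p (uu ^ K * (uu ^ P - 1))" using h unfolding per'_def by auto
  define F where "F = uu ^ K * (uu ^ P - 1)"
  obtain q r where F: "F = xn p * q + smult (int p) r" using K unfolding inI_def F_def by blast
  have px: "poly (xn p) 1 = 0" by (simp add: xn_def poly_monom)
  have pdx: "poly (pderiv (xn p)) 1 = int p" by (simp add: xn_def pderiv_diff pderiv_monom poly_monom)
  have d1: "int p dvd poly F 1" unfolding F by (simp add: px)
  have "pderiv F = xn p * pderiv q + q * pderiv (xn p) + smult (int p) (pderiv r)"
    unfolding F by (simp add: pderiv_add pderiv_mult pderiv_smult)
  then have d2: "int p dvd poly (pderiv F) 1" by (simp add: px pdx)
  have e1: "poly F 1 = 2 ^ K * (2 ^ P - 1)" by (simp add: F_def poly_uu)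
  have "pderiv F = uu ^ K * pderiv (uu ^ P) + (uu ^ P - 1) * pderiv (uu ^ K)"
    by (simp add: F_def pderiv_mult pderiv_diff)
  then have e2: "poly (pderiv F) 1 = 2 ^ K * (of_nat P * 2 ^ (P - 1)) + (2 ^ P - 1) * (of_nat K * 2 ^ (K - 1))"
    by (simp add: pderiv_power pderiv_uu poly_uu)
  have a: "int p dvd 2 ^ P - 1"
    using d1 unfolding e1 using prime_dvd_mult_iff[OF pi] prime_int_not_dvd_2pow[OF p] by blast
  then have "int p dvd (2 ^ P - 1) * (of_nat K * 2 ^ (K - 1))" by simp
  then have "int p dvd 2 ^ K * (of_nat P * 2 ^ (P - 1))" using d2 unfolding e2 using dvd_add_left_iff by blast
  then have "int p dvd of_nat P"
    using prime_dvd_mult_iff[OF pi] prime_int_not_dvd_2pow[OF p] by blast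
  then show ?thesis by simp
qed

definition phi :: "int poly \<Rightarrow> bit poly" where "phi f = map_poly of_int f"

lemma phi_0[simp]: "phi 0 = 0" unfolding phi_def by simp
lemma phi_add: "phi (f + g) = phi f + phi g"
  unfolding phi_def by (rule poly_eqI) (simp add: coeff_map_poly)
lemma phi_uminus: "phi (- f) = - phi f"
  unfolding phi_def by (rule poly_eqI) (simp add: coeff_map_poly)
lemma phi_diff: "phi (f - g) = phi f - phi g"
  unfolding phi_def by (rule poly_eqI) (simp add: coeff_map_poly)
lemma phi_smult: "phi (smult a f) = smult (of_int a) (phi f)"
  unfolding phi_def by (rule poly_eqI) (simp add: coeff_map_poly)
lemma phi_pCons: "phi (pCons a f) = pCons (of_int a) (phi f)"
  unfolding phi_def by (simp add: map_poly_pCons)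
lemma phi_mult: "phi (f * g) = phi f * phi g"
proof (induct f)
  case 0 show ?case by simp
next
  case (pCons a f)
  have "phi (pCons a f * g) = phi (smult a g + pCons 0 (f * g))" by (simp only: mult_pCons_left)
  also have "\<dots> = smult (of_int a) (phi g) + pCons 0 (phi f * phi g)"
    by (simp only: phi_add phi_smult phi_pCons pCons.hyps of_int_0)
  also have "\<dots> = phi (pCons a f) * phi g" by (simp only: phi_pCons mult_pCons_left)
  finally show ?case .
qed
lemma phi_1: "phi 1 = 1" unfolding phi_def by simp
lemma phi_pow: "phi (f ^ k) = phi f ^ k"
  by (induct k) (simp_all add: phi_1 phi_mult)
lemma phi_monom: "phi (monom c k) = monom (of_int c) k"
  unfolding phi_def by (simp add: map_poly_monom)

lemma comm_cancel:
  fixes v y c a :: "'a::comm_ring_1"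
  assumes vy: "v * y = 1 - c" and d: "c dvd v ^ K * a"
  shows "c dvd a"
proof -
  have "1 - (1 - c) ^ K = (1 - (1 - c)) * (\<Sum>i<K. (1 - c) ^ i)" by (rule one_diff_power_eq)
  then have "c dvd 1 - (1 - c) ^ K" by simp
  then have d1: "c dvd a * (1 - (1 - c) ^ K)" by simp
  have "(1 - c) ^ K = v ^ K * y ^ K" using vy by (metis power_mult_distrib)
  moreover have "a * (v ^ K * y ^ K) = (v ^ K * a) * y ^ K" by (simp add: ac_simps)
  ultimately have d2: "c dvd a * (1 - c) ^ K" using d by (metis dvd_mult2)
  have "a = a * (1 - (1 - c) ^ K) + a * (1 - c) ^ K" by (simp add: algebra_simps)
  then show ?thesis using dvd_add[OF d1 d2] by metis
qed

lemma bit_of_nat_odd: "odd d \<Longrightarrow> (of_nat d :: bit) = 1"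
  by (auto elim!: oddE)

lemma bit_poly_neg1: "- (1 :: bit poly) = 1"
  by (simp add: one_pCons)

lemma base_two:
  assumes d: "odd d" "1 < d" and h: "per 2 (2 * d) P"
  shows "even P"
proof (rule ccontr)
  assume oP: "odd P"
  obtain K where K: "inI 2 (2 * d) (uu ^ K * (uu ^ P - 1))" using h unfolding per'_def by auto
  obtain q r where F: "uu ^ K * (uu ^ P - 1) = xn (2 * d) * q + smult (int 2) r" using K unfolding inI_def by blast
  define v :: "bit poly" where "v = [:1, 1:]"
  define X :: "bit poly" where "X = monom 1 1"
  define g :: "bit poly" where "g = (\<Sum>i<d. X ^ i)"
  have pv: "phi uu = v" by (simp add: uu_def v_def phi_pCons)
  have "phi (uu ^ K * (uu ^ P - 1)) = phi (xn (2 * d) * q + smult (int 2) r)" using F by simp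
  then have e1: "v ^ K * (v ^ P - 1) = (monom 1 (2 * d) - 1) * phi q"
    by (simp add: phi_mult phi_pow phi_diff phi_1 phi_add phi_smult xn_def phi_monom pv)
  have Xd: "X ^ k = monom 1 k" for k unfolding X_def by (simp add: monom_pow)
  have e2: "monom 1 d - 1 = (X - 1) * g" unfolding g_def Xd[symmetric] by (rule power_diff_1_eq)
  have e3: "monom (1::bit) (2 * d) - 1 = (monom 1 d - 1) * (monom 1 d + 1)"
    by (simp add: algebra_simps mult_monom mult_2 mult_2_right)
  have e4: "monom (1::bit) d + 1 = monom 1 d - 1" using bit_poly_neg1 by (metis diff_minus_eq_add)
  have "g * g dvd monom 1 (2 * d) - 1" unfolding e3 e4 e2 by (simp add: algebra_simps)
  then have gg: "g * g dvd v ^ K * (v ^ P - 1)" unfolding e1 by simp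
  have pg: "poly g 1 = 1" unfolding g_def X_def using bit_of_nat_odd[OF d(1)] by (simp add: poly_sum poly_monom)
  have "poly (g - 1) 1 = 0" using pg by simp
  then have "[:- 1, 1:] dvd g - 1" using poly_eq_0_iff_dvd by blast
  moreover have "[:- 1, 1:] = v" unfolding v_def by simp
  ultimately obtain s where s: "g - 1 = v * s" by (auto elim: dvdE)
  have vy1: "v * (- s) = 1 - g" using s by (simp add: algebra_simps)
  have vy2: "v * (- s * (1 + g)) = 1 - g * g" using s by (simp add: algebra_simps)
  have "g * g dvd v ^ P - 1" by (rule comm_cancel[OF vy2 gg])
  then obtain w where w: "v ^ P - 1 = g * g * w" by (auto elim: dvdE)
  have "pderiv (v ^ P - 1) = g * (g * pderiv w + w * pderiv g + w * pderiv g)"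
    unfolding w by (simp add: pderiv_mult algebra_simps)
  then have "g dvd pderiv (v ^ P - 1)" by simp
  moreover have "pderiv (v ^ P - 1) = v ^ (P - 1)"
    using bit_of_nat_odd[OF oP] by (simp add: pderiv_diff pderiv_power v_def pderiv_pCons)
  ultimately have "g dvd v ^ (P - 1) * 1" by simp
  then have "g dvd 1" by (rule comm_cancel[OF vy1])
  moreover have "g \<noteq> 0" using pg by auto
  ultimately have "degree g = 0" using is_unit_iff_degree by blast
  moreover have "coeff g 1 = 1" unfolding g_def Xd using d by (simp add: coeff_sum coeff_monom)
  then have "1 \<le> degree g" by (intro le_degree) simp
  ultimately show False by simp
qed

lemma E_pk:
  assumes p: "prime p" and n': "0 < n'" "\<not> p dvd n'" and ex: "p \<noteq> 2 \<or> n' \<noteq> 1"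
  shows "E p (p ^ k * n') = p ^ k * E p n'"
proof (induct k)
  case 0 then show ?case by simp
next
  case (Suc k)
  have p0: "0 < p" using p prime_gt_0_nat by blast
  define N where "N = p ^ k * n'"
  have N: "0 < N" using p0 n' by (simp add: N_def)
  have "p dvd E p (p * N)"
  proof (cases "p = 2")
    case False
    have "per p p (E p p)" by (rule per_E(2)[OF per_exists]) (use p0 in auto)
    then have "p dvd E p p" by (rule base_odd[OF p False])
    moreover have "E p p dvd E p (p * N)" by (rule E_mono) (use p0 N in auto)
    ultimately show ?thesis by (rule dvd_trans)
  next
    case True
    then have d: "odd n'" "1 < n'" using n' ex by auto
    have "per 2 (2 * n') (E 2 (2 * n'))" by (rule per_E(2)[OF per_exists]) (use n' in auto)
    then have "even (E 2 (2 * n'))" by (rule base_two[OF d])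
    moreover have "E 2 (2 * n') dvd E 2 (2 * N)" by (rule E_mono) (use n' N in \<open>auto simp: N_def\<close>)
    ultimately show ?thesis using True by (metis dvd_trans)
  qed
  then have "E p (p * N) = p * E p N" by (rule E_rec[OF p N])
  then show ?case using Suc by (simp add: N_def mult.assoc)
qed

lemma E_coprime:
  assumes p: "prime p" and n': "0 < n'" "\<not> p dvd n'"
  shows "\<not> p dvd E p n'"
proof
  assume pd: "p dvd E p n'"
  have p0: "0 < p" using p prime_gt_0_nat by blast
  define j where "j = totient n'"
  have j: "0 < j" using n' by (simp add: j_def)
  have "coprime p n'" using p n' by (simp add: prime_imp_coprime)
  then have "[p ^ j = 1] (mod n')" unfolding j_def by (rule euler_theorem)
  moreover have pj: "1 \<le> p ^ j" using p0 by simp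
  ultimately have nd: "n' dvd p ^ j - 1" using cong_altdef_nat by blast
  have s1: "Suc (p ^ j - Suc 0) = p ^ j" using pj by simp
  have "monom 1 (p ^ j) - monom 1 1 = monom 1 1 * xn (p ^ j - 1)"
    using pj by (simp add: xn_def right_diff_distrib mult_monom s1)
  then have "inI p n' (monom 1 (p ^ j) - monom 1 1)"
    using xn_dvd[OF nd] by (metis dvdE inI_multL inI_xn)
  moreover have "inI p n' (uu ^ (p ^ j) - (1 + monom 1 (p ^ j)))" by (rule frob_uu[OF p])
  ultimately have "inI p n' (uu ^ (p ^ j) - (1 + monom 1 (p ^ j)) + (monom 1 (p ^ j) - monom 1 1))"
    by (intro inI_add)
  moreover have "uu ^ (p ^ j) - (1 + monom 1 (p ^ j)) + (monom 1 (p ^ j) - monom 1 1) = uu ^ 1 * (uu ^ (p ^ j - 1) - 1) * 1"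
  proof -
    have t: "uu * uu ^ (p ^ j - 1) = uu ^ (p ^ j)" using s1 by (metis power_Suc One_nat_def)
    have "uu ^ (p ^ j) - (1 + monom 1 (p ^ j)) + (monom 1 (p ^ j) - monom 1 1) = uu ^ (p ^ j) - (1 + monom 1 1)" by simp
    also have "\<dots> = uu ^ (p ^ j) - uu" by (simp only: uu_alt[symmetric])
    also have "\<dots> = uu ^ 1 * (uu ^ (p ^ j - 1) - 1) * 1" using t by (simp add: algebra_simps)
    finally show ?thesis .
  qed
  ultimately have "per p n' (p ^ j - 1)" unfolding per'_def by metis
  then have "E p n' dvd p ^ j - 1" using per_iff_dvd[OF per_exists[OF n'(1) p0]] by blast
  then have "p dvd p ^ j - 1" using pd dvd_trans by blast
  moreover have "p dvd p ^ j" using j by (simp add: dvd_power)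
  ultimately have "p dvd p ^ j - (p ^ j - 1)" by (rule dvd_diff_nat[rotated])
  then have "p dvd 1" using pj by simp
  then show False using p by simp
qed

lemma smult_of_nat_poly: "smult (int p) f = of_nat p * f" by (simp add: of_nat_poly)

lemma inI_sum: "(\<And>i. i \<in> A \<Longrightarrow> inI m n (f i)) \<Longrightarrow> inI m n (\<Sum>i\<in>A. f i)"
  by (induct A rule: infinite_finite_induct) (simp_all add: inI_add)

lemma lift_step:
  assumes K: "inI p n (uu ^ K * (w - 1))" and A: "inI (p ^ (j + 1)) n (uu ^ K' * (w ^ (p ^ j) - 1))"
  shows "inI (p ^ (j + 2)) n (uu ^ (K' + K) * (w ^ (p ^ (j + 1)) - 1))"
proof -
  define B where "B = uu ^ K * (\<Sum>i<p. (w ^ (p ^ j)) ^ i)"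
  have wc: "inI p n (uu ^ K * (w ^ c - 1))" for c
  proof -
    have "w ^ c - 1 = (w - 1) * (\<Sum>i<c. w ^ i)" by (rule power_diff_1_eq)
    then show ?thesis using inI_multR[OF K, of "\<Sum>i<c. w ^ i"] by (simp add: mult.assoc)
  qed
  have "B - smult (int p) (uu ^ K) = (\<Sum>i<p. uu ^ K * (w ^ (p ^ j * i) - 1))"
    by (simp add: B_def sum_distrib_left sum_subtractf right_diff_distrib power_mult smult_of_nat_poly)
  then have "inI p n (B - smult (int p) (uu ^ K))" using wc inI_sum by metis
  from inI_add[OF this inI_smult[of p n "uu ^ K"]] have B: "inI p n B" by simp
  have "w ^ (p ^ (j + 1)) - 1 = (w ^ (p ^ j)) ^ p - 1" by (simp add: power_mult[symmetric] mult.commute)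
  also have "\<dots> = (w ^ (p ^ j) - 1) * (\<Sum>i<p. (w ^ (p ^ j)) ^ i)" by (rule power_diff_1_eq)
  finally have eq: "w ^ (p ^ (j + 1)) - 1 = (w ^ (p ^ j) - 1) * (\<Sum>i<p. (w ^ (p ^ j)) ^ i)" .
  have "uu ^ (K' + K) * (w ^ (p ^ (j + 1)) - 1) = (uu ^ K' * (w ^ (p ^ j) - 1)) * B"
    unfolding eq B_def by (simp add: power_add ac_simps)
  moreover have "inI (p ^ (j + 1) * p) n ((uu ^ K' * (w ^ (p ^ j) - 1)) * B)" by (rule inI_prod[OF A B])
  moreover have "p ^ (j + 1) * p = p ^ (j + 2)" by simp
  ultimately show ?thesis by metis
qed

lemma lift_per:
  assumes h: "per p n L"
  shows "per (p ^ (j + 1)) n (p ^ j * L)"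
proof -
  obtain K where K: "inI p n (uu ^ K * (uu ^ L - 1))" using h unfolding per'_def by auto
  have "\<exists>K'. inI (p ^ (j + 1)) n (uu ^ K' * ((uu ^ L) ^ (p ^ j) - 1))"
  proof (induct j)
    case 0 then show ?case using K by auto
  next
    case (Suc j)
    then obtain K' where "inI (p ^ (j + 1)) n (uu ^ K' * ((uu ^ L) ^ (p ^ j) - 1))" by blast
    from lift_step[OF K this] show ?case by auto
  qed
  then show ?thesis unfolding per'_def by (simp add: power_mult[symmetric] mult.commute)
qed

lemma bin2:
  fixes a b :: "'a::comm_ring_1"
  shows "\<exists>R. (a + b) ^ t = a ^ t + of_nat t * a ^ (t - 1) * b + b ^ 2 * R"
proof (induct t)
  case 0 show ?case by (rule exI[of _ 0]) simp
next
  case (Suc t)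
  then obtain R where R: "(a + b) ^ t = a ^ t + of_nat t * a ^ (t - 1) * b + b ^ 2 * R" by blast
  show ?case
  proof (cases t)
    case 0
    show ?thesis by (rule exI[of _ 0]) (simp add: 0)
  next
    case (Suc t')
    have "(a + b) ^ Suc t = (a + b) * (a ^ t + of_nat t * a ^ (t - 1) * b + b ^ 2 * R)" using R by simp
    also have "\<dots> = a ^ Suc t + of_nat (Suc t) * a ^ (Suc t - 1) * b + b ^ 2 * (of_nat t * a ^ t' + R * (a + b))"
      by (simp add: Suc algebra_simps power2_eq_square)
    finally show ?thesis by blast
  qed
qed

lemma pow_p_step:
  fixes y :: "'a::comm_ring_1"
  assumes p: "prime p" "p \<noteq> 2" and j: "1 \<le> j"
  shows "\<exists>z. (1 + of_nat p ^ j * y) ^ p = 1 + of_nat p ^ (j + 1) * (y + of_nat p * z)"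
proof -
  define b where "b = of_nat p ^ j * y"
  define f where "f i = of_nat (p choose i) * b ^ i" for i
  have p3: "3 \<le> p" using p prime_ge_2_nat[of p] by (cases "p = 2") auto
  have "(b + 1) ^ p = (\<Sum>i\<le>p. f i)" unfolding binomial_ring f_def by simp
  also have "\<dots> = f 0 + f 1 + (\<Sum>i\<in>{2..p}. f i)"
  proof -
    have "{..p} = insert 0 (insert 1 {2..p})" using p3 by auto
    then show ?thesis by simp
  qed
  finally have eq: "(1 + b) ^ p - 1 - of_nat p * b = (\<Sum>i\<in>{2..p}. f i)" by (simp add: f_def add.commute)
  have "of_nat p ^ (j + 2) dvd f i" if i: "i \<in> {2..p}" for i
  proof (cases "i = p")
    case True
    have "j * 3 \<le> j * p" using p3 by simp
    then have "j + 2 \<le> j * p" using j by linarith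
    then have "of_nat p ^ (j + 2) dvd (of_nat p :: 'a) ^ (j * p)" by (rule le_imp_power_dvd)
    then have "of_nat p ^ (j + 2) dvd (of_nat p ^ j :: 'a) ^ p" by (simp only: power_mult)
    then show ?thesis unfolding f_def b_def True by (simp add: power_mult_distrib)
  next
    case False
    then have "p dvd (p choose i)" using dvd_choose_prime[of i p] i p by auto
    then obtain c where c: "p choose i = p * c" by (auto elim: dvdE)
    have "j * 2 \<le> j * i" using i by simp
    then have "j + 1 \<le> j * i" using j by linarith
    then have "of_nat p ^ (j + 1) dvd (of_nat p :: 'a) ^ (j * i)" by (rule le_imp_power_dvd)
    then have "of_nat p ^ (j + 1) dvd (of_nat p ^ j :: 'a) ^ i" by (simp only: power_mult)
    then obtain k where k: "(of_nat p ^ j :: 'a) ^ i = of_nat p ^ (j + 1) * k" by (auto elim: dvdE)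
    have "of_nat p * of_nat p ^ (j + 1) dvd of_nat p * (of_nat p ^ j :: 'a) ^ i"
      unfolding k by (rule dvdI[of _ _ k]) (simp add: ac_simps)
    then have "of_nat p ^ (j + 2) dvd of_nat p * (of_nat p ^ j) ^ i * (of_nat c * y ^ i)"
      by (simp add: power_Suc dvd_mult2)
    then show ?thesis unfolding f_def b_def c by (simp add: power_mult_distrib ac_simps)
  qed
  then have "of_nat p ^ (j + 2) dvd (1 + b) ^ p - 1 - of_nat p * b" unfolding eq by (intro dvd_sum) auto
  then obtain z where z: "(1 + b) ^ p - 1 - of_nat p * b = of_nat p ^ (j + 2) * z" by (auto elim: dvdE)
  have "(1 + b) ^ p = 1 + of_nat p ^ (j + 1) * (y + of_nat p * z)"
    using z unfolding b_def by (simp add: algebra_simps power_Suc eq_diff_eq)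
  then show ?thesis unfolding b_def by blast
qed

lemma pow_pa:
  fixes w :: "'a::comm_ring_1"
  assumes p: "prime p" "p \<noteq> 2"
  shows "\<exists>z. (1 + of_nat p * w) ^ (p ^ a) = 1 + of_nat p ^ (a + 1) * (w + of_nat p * z)"
proof (induct a)
  case 0 show ?case by (rule exI[of _ 0]) simp
next
  case (Suc a)
  then obtain z where z: "(1 + of_nat p * w) ^ (p ^ a) = 1 + of_nat p ^ (a + 1) * (w + of_nat p * z)" by blast
  obtain z' where z': "(1 + of_nat p ^ (a + 1) * (w + of_nat p * z)) ^ p = 1 + of_nat p ^ (a + 1 + 1) * ((w + of_nat p * z) + of_nat p * z')"
    using pow_p_step[OF p, of "a + 1" "w + of_nat p * z"] by auto
  have "(1 + of_nat p * w) ^ (p ^ Suc a) = ((1 + of_nat p * w) ^ (p ^ a)) ^ p"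
    by (simp add: power_mult[symmetric] mult.commute)
  also have "\<dots> = 1 + of_nat p ^ (Suc a + 1) * (w + of_nat p * (z + z'))" unfolding z z' by (simp add: algebra_simps)
  finally show ?case by blast
qed

lemma pow_final:
  fixes w :: "'a::comm_ring_1"
  assumes p: "prime p" "p \<noteq> 2"
  shows "\<exists>z. (1 + of_nat p * w) ^ (p ^ a * s) = 1 + of_nat p ^ (a + 1) * (of_nat s * w + of_nat p * z)"
proof -
  obtain z where z: "(1 + of_nat p * w) ^ (p ^ a) = 1 + of_nat p ^ (a + 1) * (w + of_nat p * z)"
    using pow_pa[OF p] by blast
  define y where "y = w + of_nat p * z"
  obtain R where R: "(1 + of_nat p ^ (a + 1) * y) ^ s = 1 ^ s + of_nat s * 1 ^ (s - 1) * (of_nat p ^ (a + 1) * y) + (of_nat p ^ (a + 1) * y) ^ 2 * R"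
    using bin2 by blast
  have "(1 + of_nat p * w) ^ (p ^ a * s) = (1 + of_nat p ^ (a + 1) * y) ^ s"
    by (simp add: power_mult z y_def)
  also have "\<dots> = 1 + of_nat p ^ (a + 1) * (of_nat s * w + of_nat p * (of_nat s * z + of_nat p ^ a * y ^ 2 * R))"
    unfolding R by (simp add: y_def algebra_simps power2_eq_square)
  finally show ?thesis by blast
qed

lemma foldc_1: "foldc 1 f 0 = poly f 1"
  unfolding foldc_def poly_altdef by simp

lemma inI_1_iff: "inI m 1 f \<longleftrightarrow> int m dvd poly f 1"
proof -
  have "inI m 1 f \<longleftrightarrow> (\<forall>r<1. int m dvd foldc 1 f r)" by (rule inI_iff_foldc) simp
  also have "\<dots> \<longleftrightarrow> int m dvd foldc 1 f 0" by auto
  finally show ?thesis unfolding foldc_1 .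
qed

lemma per_one_iff:
  assumes p: "prime p" "p \<noteq> 2"
  shows "per p 1 P \<longleftrightarrow> int p dvd 2 ^ P - 1"
proof
  assume "per p 1 P"
  then obtain K where "inI p 1 (uu ^ K * (uu ^ P - 1) * 1)" unfolding per'_def by blast
  then have "int p dvd 2 ^ K * (2 ^ P - 1)" unfolding inI_1_iff by (simp add: poly_uu)
  moreover have "prime (int p)" using p by simp
  ultimately show "int p dvd 2 ^ P - 1" using prime_dvd_mult_iff prime_int_not_dvd_2pow[OF p] by blast
next
  assume "int p dvd 2 ^ P - 1"
  then have "inI p 1 (uu ^ 0 * (uu ^ P - 1) * 1)" unfolding inI_1_iff by (simp add: poly_uu)
  then show "per p 1 P" unfolding per'_def by blast
qed

lemma fold_uuN: assumes N: "0 < N" shows "foldc N (uu ^ N) 0 = 2"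
proof -
  have dg: "degree (uu ^ N) \<le> N" using degree_power_le[of uu N] by (simp add: uu_def)
  have "foldc N (uu ^ N) 0 = (\<Sum>l\<le>N. if l mod N = 0 then coeff (uu ^ N) l else 0)"
    by (rule foldc_bound[OF dg])
  also have "\<dots> = (\<Sum>l\<in>{0, N}. if l mod N = 0 then coeff (uu ^ N) l else 0)"
  proof (rule sum.mono_neutral_right)
    show "\<forall>i\<in>{..N} - {0, N}. (if i mod N = 0 then coeff (uu ^ N) i else 0) = 0"
    proof
      fix i assume "i \<in> {..N} - {0, N}"
      then have "0 < i" "i < N" by auto
      then show "(if i mod N = 0 then coeff (uu ^ N) i else 0) = 0" by simp
    qed
  qed auto
  also have "\<dots> = coeff (uu ^ N) 0 + coeff (uu ^ N) N" using N by simp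
  also have "\<dots> = 2" using coeff_linear_poly_power[of 0 N "1::int" 1] coeff_linear_poly_power[of N N "1::int" 1]
    by (simp add: uu_def)
  finally show ?thesis .
qed

lemma inI_zero_any: "inI 0 n f \<Longrightarrow> inI m n f"
  by (rule inI_mono[of m 0 n n]) auto

lemma bootstrap:
  assumes CY: "inI (p ^ e) N (C * Y)" and C1: "inI p N (C - 1)" and i: "i \<le> e"
  shows "inI (p ^ i) N Y"
  using i
proof (induct i)
  case 0 show ?case using inI_one[of N Y] by simp
next
  case (Suc i)
  then have IH: "inI (p ^ i) N Y" by simp
  have "p ^ Suc i dvd p ^ e" by (rule le_imp_power_dvd) (use Suc.prems in simp)
  then have a: "inI (p ^ Suc i) N (C * Y)" by (rule inI_mono[OF _ dvd_refl CY])
  have b: "inI (p * p ^ i) N ((C - 1) * Y)" by (rule inI_prod[OF C1 IH])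
  have "Y = C * Y - (C - 1) * Y" by (simp add: algebra_simps)
  then show ?case using inI_diff[OF a] b by (metis power_Suc)
qed

lemma t_props:
  assumes p: "prime p" "p \<noteq> 2" and nw: "\<not> wieferich p"
  shows "\<exists>\<alpha>. (2::int) ^ E p 1 = 1 + int p * \<alpha> \<and> \<not> int p dvd \<alpha>"
proof -
  have p0: "0 < p" using p prime_gt_0_nat by blast
  have ex: "\<exists>P>0. per p 1 P" by (rule per_exists) (use p0 in auto)
  define t where "t = E p 1"
  have "int p dvd 2 ^ t - 1" using per_E(2)[OF ex] per_one_iff[OF p] by (simp add: t_def)
  then obtain \<alpha> where a: "2 ^ t - 1 = int p * \<alpha>" by (auto elim: dvdE)
  have "\<not> p dvd 2" using p by (metis dvd_imp_le prime_ge_2_nat le_antisym zero_less_numeral)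
  then have "[2 ^ (p - 1) = 1] (mod p)" by (rule fermat_theorem[OF p(1)])
  then have "[int (2 ^ (p - 1)) = int 1] (mod int p)" using cong_int_iff by blast
  then have "int p dvd 2 ^ (p - 1) - 1" by (simp add: cong_iff_dvd_diff)
  then have "per p 1 (p - 1)" using per_one_iff[OF p] by blast
  then have "t dvd p - 1" using per_iff_dvd[OF ex] by (simp add: t_def)
  then obtain m where m: "p - 1 = t * m" by (auto elim: dvdE)
  have "\<not> int p dvd \<alpha>"
  proof
    assume "int p dvd \<alpha>"
    then have d1: "int p * int p dvd 2 ^ t - 1" unfolding a by simp
    have "(2::int) ^ (p - 1) - 1 = (2 ^ t) ^ m - 1" by (simp only: m power_mult)
    also have "\<dots> = (2 ^ t - 1) * (\<Sum>i<m. (2 ^ t) ^ i)" by (rule power_diff_1_eq)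
    finally have "int p * int p dvd 2 ^ (p - 1) - 1" using d1 by simp
    then have "int (p ^ 2) dvd int (2 ^ (p - 1)) - int 1" by (simp add: power2_eq_square)
    then have "[int (2 ^ (p - 1)) = int 1] (mod int (p ^ 2))" by (simp add: cong_iff_dvd_diff)
    then have "[2 ^ (p - 1) = 1] (mod p ^ 2)" using cong_int_iff by blast
    then show False using nw p unfolding wieferich_def by simp
  qed
  then show ?thesis using a by (auto simp: t_def algebra_simps)
qed

lemma foldc_one: "foldc n 1 0 = 1"
  using foldc_monom[of n 1 0 0] by simp

lemma const_poly_pow: "[:a::'a::comm_semiring_1:] ^ n = [:a ^ n:]"
  by (induct n) (simp_all add: one_pCons mult.commute)

lemma lower_bound:
  assumes p: "prime p" "p \<noteq> 2" and nw: "\<not> wieferich p" and e: "1 \<le> e"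
  shows "p ^ (e - 1 + k) dvd E (p ^ e) (p ^ k)"
proof -
  have p0: "0 < p" using p prime_gt_0_nat by blast
  define N where "N = p ^ k"
  have N0: "0 < N" using p0 by (simp add: N_def)
  define t where "t = E p 1"
  obtain \<alpha> where al: "(2::int) ^ t = 1 + int p * \<alpha>" and nal: "\<not> int p dvd \<alpha>"
    using t_props[OF p nw] unfolding t_def by blast
  have pe0: "0 < p ^ e" using p0 by simp
  have exL: "\<exists>P>0. per (p ^ e) N P" by (rule per_exists[OF N0 pe0])
  define L where "L = E (p ^ e) N"
  have L0: "0 < L" using per_E(1)[OF exL] by (simp add: L_def)
  obtain K where K: "inI (p ^ e) N (uu ^ K * (uu ^ L - 1))"
    using per_E(2)[OF exL] unfolding per'_def L_def by auto
  have "E p N dvd L" unfolding L_def by (rule E_mono) (use p0 N0 e in \<open>auto simp: dvd_power\<close>)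
  moreover have "E p N = N * t" unfolding N_def t_def using E_pk[OF p(1), of 1 k] p prime_gt_1_nat[OF p(1)] by simp
  ultimately obtain s where Ls: "L = N * t * s" by (auto elim: dvdE)
  obtain B where B: "uu ^ N - (1 + monom 1 N) = smult (int p) B"
    using frob_uu[OF p(1), of 0 k] unfolding inI_def N_def by (auto simp: xn_def)
  have fB: "foldc N B 0 = 0"
  proof -
    have "foldc N (uu ^ N - (1 + monom 1 N)) 0 = int p * foldc N B 0" unfolding B by (simp add: foldc_smult)
    moreover have "foldc N (uu ^ N - (1 + monom 1 N)) 0 = 0"
      using fold_uuN[OF N0] by (simp add: foldc_diff foldc_add foldc_monom foldc_one)
    ultimately show ?thesis using p0 by simp
  qed
  have "uu ^ N = 1 + monom 1 N + smult (int p) B" using B by (simp add: algebra_simps)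
  then have "uu ^ N - ([:2:] + smult (int p) B) = xn N * 1"
    by (simp add: xn_def one_pCons algebra_simps)
  then have cong1: "inI 0 N (uu ^ N - ([:2:] + smult (int p) B))" using inI_xn[of 0 N 1] by simp
  obtain R where R: "([:2:] + smult (int p) B) ^ t = [:2:] ^ t + of_nat t * [:2:] ^ (t - 1) * smult (int p) B + (smult (int p) B) ^ 2 * R"
    using bin2 by blast
  define w1 where "w1 = [:\<alpha>:] + smult (int t * 2 ^ (t - 1)) B + smult (int p) (B ^ 2 * R)"
  have cw: "([:2:] + smult (int p) B) ^ t = 1 + smult (int p) w1"
  proof -
    have "[:(2::int):] ^ t = 1 + smult (int p) [:\<alpha>:]" unfolding const_poly_pow al by (simp add: one_pCons)
    moreover have "of_nat t * [:(2::int):] ^ (t - 1) * smult (int p) B = smult (int p) (smult (int t * 2 ^ (t - 1)) B)"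
      unfolding const_poly_pow by (simp add: of_nat_poly ac_simps)
    moreover have "(smult (int p) B) ^ 2 * R = smult (int p) (smult (int p) (B ^ 2 * R))"
      by (simp add: power2_eq_square ac_simps)
    ultimately show ?thesis unfolding R w1_def by (simp add: smult_add_right algebra_simps)
  qed
  define c where "c = uu ^ (N * t)"
  have cc: "inI 0 N (c - (1 + smult (int p) w1))"
    using inI_pow_cong[OF cong1, of t] unfolding cw c_def by (simp add: power_mult)
  have fw: "foldc N w1 0 = \<alpha> + int p * foldc N (B ^ 2 * R) 0"
    unfolding w1_def using foldc_monom[of N \<alpha> 0 0] by (simp add: foldc_add foldc_smult fB monom_0)
  have c1: "inI p N (c - 1)"
  proof -
    have "c - 1 = (c - (1 + smult (int p) w1)) + smult (int p) w1" by simp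
    then show ?thesis using inI_add[OF inI_zero_any[OF cc] inI_smult] by metis
  qed
  have t0: "0 < t" unfolding t_def by (rule per_E(1)[OF per_exists]) (use p0 in auto)
  define Y where "Y = c ^ s - 1"
  have uL: "uu ^ L = c ^ s" by (simp add: Ls c_def power_mult)
  have CY: "inI (p ^ e) N (c ^ K * Y)"
  proof -
    have NK: "K \<le> N * t * K" using N0 t0 by simp
    have "uu ^ (N * t * K - K) * (uu ^ K * (uu ^ L - 1)) = uu ^ (N * t * K - K + K) * (uu ^ L - 1)"
      by (simp add: power_add)
    also have "N * t * K - K + K = N * t * K" using NK by simp
    also have "uu ^ (N * t * K) * (uu ^ L - 1) = c ^ K * Y" by (simp add: c_def Y_def uL power_mult)
    finally show ?thesis using inI_multL[OF K] by metis
  qed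
  have Yin: "inI (p ^ e) N Y"
    by (rule bootstrap[OF CY _ order_refl]) (use inI_pow_cong[OF c1, of K] in simp)
  have Y2: "inI (p ^ e) N ((1 + smult (int p) w1) ^ s - 1)"
  proof -
    have "inI (p ^ e) N (c ^ s - (1 + smult (int p) w1) ^ s)" by (rule inI_zero_any[OF inI_pow_cong[OF cc]])
    from inI_diff[OF Yin this] show ?thesis by (simp add: Y_def)
  qed
  have "p ^ (e - 1) dvd s"
  proof (rule ccontr)
    assume nd: "\<not> p ^ (e - 1) dvd s"
    have s0: "s \<noteq> 0" using L0 Ls by auto
    have pu: "\<not> is_unit p" using p by auto
    define a where "a = multiplicity p s"
    obtain s' where s': "s = p ^ a * s'" "\<not> p dvd s'"
      using multiplicity_decompose'[OF s0 pu] unfolding a_def by metis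
    have a: "a + 2 \<le> e"
    proof (rule ccontr)
      assume "\<not> a + 2 \<le> e"
      then have "e - 1 \<le> a" by simp
      then have "p ^ (e - 1) dvd p ^ a" by (rule le_imp_power_dvd)
      then show False using nd s' by (metis dvd_mult2)
    qed
    obtain z where z: "(1 + of_nat p * w1) ^ (p ^ a * s') = 1 + of_nat p ^ (a + 1) * (of_nat s' * w1 + of_nat p * z)"
      using pow_final[OF p] by blast
    define V where "V = of_nat s' * w1 + of_nat p * z"
    have "inI (p ^ e) N (smult (int (p ^ (a + 1))) V)"
      using Y2 unfolding s'(1) smult_of_nat_poly z V_def by (simp add: of_nat_poly const_poly_pow mult.commute)
    moreover have "p ^ (a + 2) dvd p ^ e" by (rule le_imp_power_dvd[OF a])
    ultimately have "inI (p ^ (a + 2)) N (smult (int (p ^ (a + 1))) V)" by (rule inI_mono[OF _ dvd_refl, rotated])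
    then have f: "int (p ^ (a + 2)) dvd foldc N (smult (int (p ^ (a + 1))) V) 0" by (rule foldc_inI[OF N0])
    have "int (p ^ (a + 2)) = int (p ^ (a + 1)) * int p" by simp
    with f have "int (p ^ (a + 1)) * int p dvd int (p ^ (a + 1)) * foldc N V 0" by (simp only: foldc_smult)
    moreover have "int (p ^ (a + 1)) \<noteq> 0" using p0 by simp
    ultimately have dV: "int p dvd foldc N V 0" using dvd_times_left_cancel_iff by blast
    have "foldc N V 0 = int s' * \<alpha> + int p * (int s' * foldc N (B ^ 2 * R) 0 + foldc N z 0)"
    proof -
      have "V = smult (int s') w1 + smult (int p) z" by (simp add: V_def smult_of_nat_poly)
      then show ?thesis by (simp add: foldc_add foldc_smult fw algebra_simps)
    qed
    then have "int p dvd int s' * \<alpha>" using dV by (simp add: dvd_add_left_iff)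
    moreover have "prime (int p)" using p by simp
    ultimately have "int p dvd int s' \<or> int p dvd \<alpha>" using prime_dvd_mult_iff by blast
    then show False using s'(2) nal by simp
  qed
  then obtain s2 where "s = p ^ (e - 1) * s2" by (auto elim: dvdE)
  then have "L = p ^ (e - 1 + k) * (t * s2)" unfolding Ls N_def by (simp add: power_add ac_simps)
  then show ?thesis unfolding L_def N_def by simp
qed

lemma G_lemma:
  assumes p: "prime p" "p \<noteq> 2" and nw: "\<not> wieferich p" and e: "1 \<le> e"
    and n': "0 < n'" "\<not> p dvd n'"
  shows "E (p ^ e) (p ^ k * n') = p ^ (e - 1) * E p (p ^ k * n')"
proof -
  have p0: "0 < p" using p prime_gt_0_nat by blast
  have p1: "1 < p" using p prime_gt_1_nat by blast
  define n where "n = p ^ k * n'"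
  have n0: "0 < n" using p0 n' by (simp add: n_def)
  have pe0: "0 < p ^ e" using p0 by simp
  have ex1: "\<exists>P>0. per p n P" by (rule per_exists[OF n0 p0])
  have ex2: "\<exists>P>0. per (p ^ e) n P" by (rule per_exists[OF n0 pe0])
  have "E p n dvd E (p ^ e) n" by (rule E_mono) (use p0 n0 e in \<open>auto simp: dvd_power\<close>)
  then obtain d where d: "E (p ^ e) n = E p n * d" by (auto elim: dvdE)
  have "per (p ^ (e - 1 + 1)) n (p ^ (e - 1) * E p n)" by (rule lift_per[OF per_E(2)[OF ex1]])
  then have "per (p ^ e) n (p ^ (e - 1) * E p n)" using e by simp
  then have "E p n * d dvd p ^ (e - 1) * E p n" using per_iff_dvd[OF ex2] d by simp
  then have "d dvd p ^ (e - 1)" using per_E(1)[OF ex1] by (simp add: mult.commute)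
  then obtain b where b: "b \<le> e - 1" "d = p ^ b" using divides_primepow_nat[OF p(1)] by blast
  have "p ^ (e - 1 + k) dvd E (p ^ e) (p ^ k)" by (rule lower_bound[OF p nw e])
  also have "E (p ^ e) (p ^ k) dvd E (p ^ e) n" by (rule E_mono) (use p0 n0 in \<open>auto simp: n_def\<close>)
  finally have "p ^ k * p ^ (e - 1) dvd p ^ k * (E p n' * p ^ b)"
    using d b E_pk[OF p(1) n'] p(2) by (simp add: n_def power_add ac_simps)
  then have "p ^ (e - 1) dvd E p n' * p ^ b" using p0 by simp
  moreover have "coprime (p ^ (e - 1)) (E p n')"
    using E_coprime[OF p(1) n'] p(1) by (simp add: prime_imp_coprime)
  ultimately have "p ^ (e - 1) dvd p ^ b" using coprime_dvd_mult_right_iff by blast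
  then have "e - 1 \<le> b" using power_dvd_imp_le p1 by blast
  then have "d = p ^ (e - 1)" using b by simp
  then show ?thesis using d by (simp add: n_def mult.commute)
qed

theorem proposition5p9:
  fixes p n k n' :: nat
  assumes "prime p" and "0 < n"
    and "k = multiplicity p n" and "n = p ^ k * n'"
  shows "((p = 2 \<longrightarrow> n' \<noteq> 1) \<longrightarrow> Pmax p n = p ^ k * Pmax p n')
    \<and> (2 < p \<and> \<not> wieferich p \<longrightarrow> Pmax (p ^ 2) n = p ^ k * Pmax (p ^ 2) n')
    \<and> (2 < p \<and> \<not> wieferich p \<longrightarrow> Pmax (p ^ 3) n = p ^ k * Pmax (p ^ 3) n')"
proof -
  note p = assms(1)
  have p0: "0 < p" using p prime_gt_0_nat by blast
  have p2: "2 \<le> p" using p prime_ge_2_nat by blast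
  have n'0: "0 < n'" using assms(2,4) by (cases "n' = 0") auto
  have nd: "\<not> p dvd n'"
  proof
    assume "p dvd n'"
    have "multiplicity p n = multiplicity p (p ^ k) + multiplicity p n'"
      using assms(4) p p0 n'0 by (simp add: prime_elem_multiplicity_mult_distrib)
    also have "multiplicity p (p ^ k) = k" using p by simp
    finally have "multiplicity p n' = 0" using assms(3) by simp
    moreover have "\<not> is_unit p" using p by auto
    ultimately show False using multiplicity_eq_zero_iff[of n' p] n'0 \<open>p dvd n'\<close> by simp
  qed
  have part1: "(p = 2 \<longrightarrow> n' \<noteq> 1) \<longrightarrow> Pmax p n = p ^ k * Pmax p n'"
  proof
    assume h: "p = 2 \<longrightarrow> n' \<noteq> 1"
    have "Pmax p n = E p n" by (rule Pmax_E[OF assms(2) p2])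
    also have "\<dots> = p ^ k * E p n'" unfolding assms(4) by (rule E_pk[OF p n'0 nd]) (use h in auto)
    also have "E p n' = Pmax p n'" by (rule Pmax_E[OF n'0 p2, symmetric])
    finally show "Pmax p n = p ^ k * Pmax p n'" .
  qed
  have partG: "Pmax (p ^ e) n = p ^ k * Pmax (p ^ e) n'"
    if h: "2 < p" "\<not> wieferich p" and e: "1 \<le> e" for e
  proof -
    have p2': "p \<noteq> 2" using h by simp
    have "p ^ 1 \<le> p ^ e" by (rule power_increasing[OF e]) (use p0 in simp)
    then have pe: "2 \<le> p ^ e" using p2 by simp
    have a: "E (p ^ e) n = p ^ (e - 1) * E p n" unfolding assms(4) by (rule G_lemma[OF p p2' h(2) e n'0 nd])
    have b: "E p n = p ^ k * E p n'" unfolding assms(4) by (rule E_pk[OF p n'0 nd]) (use p2' in auto)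
    have c: "E (p ^ e) n' = p ^ (e - 1) * E p n'"
      using G_lemma[OF p p2' h(2) e n'0 nd, of 0] by simp
    have "Pmax (p ^ e) n = E (p ^ e) n" by (rule Pmax_E[OF assms(2) pe])
    also have "\<dots> = p ^ k * (p ^ (e - 1) * E p n')" unfolding a b by (simp only: ac_simps)
    also have "\<dots> = p ^ k * E (p ^ e) n'" unfolding c ..
    also have "E (p ^ e) n' = Pmax (p ^ e) n'" by (rule Pmax_E[OF n'0 pe, symmetric])
    finally show ?thesis .
  qed
  show ?thesis using part1 partG[of 2] partG[of 3] by simp
qed

end
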